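(* Let $K$ be a field of characteristic zero, $0\ne c\in K$, $\phi$ the $K$-algebra endomorphism of $K[x]$ with $\phi(x)=x+c$, and $\delta=\mathrm{id}-\phi$. Let $a\in K$, $I$ the ideal generated by $x^2-ax$, $\beta=a/c$, and $D_n(t)=\frac{B_{n+1}(t)-B_{n+1}}{(n+1)t}\in\mathbb{Q}[t]$ for $n\ge0$. Let $f(x)=\sum_{i=0}^d a_ix^i\in K[x]$. Then $f\in\delta(I)$ if and only if $\sum_{i=0}^d a_iD_i(\beta)c^i=0$.
   Context: $\mathrm{id}$ is the identity map of $K[x]$. The Bernoulli polynomials are defined by $\frac{ue^{tu}}{e^u-1}=\sum_{n\ge0}B_n(t)\frac{u^n}{n!}$, and $B_n=B_n(0)$ are the Bernoulli numbers. *)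

theory Defs
  imports "HOL-Computational_Algebra.Computational_Algebra"
begin

text \<open>Bernoulli polynomials via the generating function
  u e^{tu}/(e^u - 1) = sum_n B_n(t) u^n/n!, as a formal power series in u.\<close>
definition bernoulli_gf :: "'a::field_char_0 \<Rightarrow> 'a fps" where
  "bernoulli_gf t = fps_X * fps_exp t / (fps_exp 1 - 1)"

definition bernoulli_val :: "nat \<Rightarrow> 'a::field_char_0 \<Rightarrow> 'a" where
  "bernoulli_val n t = fact n * fps_nth (bernoulli_gf t) n"

definition bernoulli_num :: "nat \<Rightarrow> 'a::field_char_0" where
  "bernoulli_num n = bernoulli_val n 0"

definition bernpoly :: "nat \<Rightarrow> 'a::field_char_0 poly" where
  "bernpoly n = (THE p. \<forall>t. poly p t = bernoulli_val n t)"

definition Dpoly :: "nat \<Rightarrow> 'a::field_char_0 poly" where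
  "Dpoly n = (bernpoly (Suc n) - [:bernoulli_num (Suc n):]) div [:0, of_nat (Suc n):]"

definition shift_phi :: "'a::comm_ring_1 \<Rightarrow> 'a poly \<Rightarrow> 'a poly" where
  "shift_phi c f = pcompose f [:c, 1:]"

definition delta_op :: "'a::comm_ring_1 \<Rightarrow> 'a poly \<Rightarrow> 'a poly" where
  "delta_op c f = f - shift_phi c f"

end

theory Submission
  imports Defs
begin

lemma E1_ne0: "(fps_exp (1::'a::field_char_0) - 1) \<noteq> 0"
proof
  assume "fps_exp (1::'a) - 1 = 0"
  hence "(fps_exp (1::'a) - 1) $ 1 = 0" by simp
  thus False by simp
qed

lemma E1_factor: "fps_exp (1::'a::field_char_0) - 1 = fps_X * fps_shift 1 (fps_exp 1 - 1)"
  by (intro fps_ext) auto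

lemma bgf_mult: "bernoulli_gf (t::'a::field_char_0) * (fps_exp 1 - 1) = fps_X * fps_exp t"
proof -
  let ?E = "fps_exp (1::'a) - 1"
  let ?S = "fps_shift 1 ?E"
  have S0: "?S $ 0 \<noteq> 0" by simp
  have "fps_X * fps_exp t = ?E * (fps_exp t * inverse ?S)"
    by (subst E1_factor) (metis (no_types, lifting) S0 inverse_mult_eq_1' mult.commute mult.left_commute mult_1_right)
  hence "?E dvd fps_X * fps_exp t" by (metis dvdI)
  thus ?thesis unfolding bernoulli_gf_def by simp
qed

lemma bgf_exp: "bernoulli_gf (t::'a::field_char_0) = fps_exp t * bernoulli_gf 0"
proof -
  have "bernoulli_gf t * (fps_exp 1 - 1) = (fps_exp t * bernoulli_gf 0) * (fps_exp 1 - 1)"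
    by (simp only: bgf_mult mult.assoc) simp
  thus ?thesis using E1_ne0 by (simp add: mult_right_cancel)
qed

lemma bgf_diff: "bernoulli_gf ((t::'a::field_char_0) + 1) - bernoulli_gf t = fps_X * fps_exp t"
proof -
  have "(bernoulli_gf (t + 1) - bernoulli_gf t) * (fps_exp 1 - 1)
      = bernoulli_gf (t + 1) * (fps_exp 1 - 1) - bernoulli_gf t * (fps_exp 1 - 1)"
    by (rule left_diff_distrib)
  also have "\<dots> = fps_X * fps_exp (t + 1) - fps_X * fps_exp t" by (simp only: bgf_mult)
  also have "\<dots> = (fps_X * fps_exp t) * (fps_exp 1 - 1)"
    by (simp add: fps_exp_add_mult algebra_simps)
  finally have "(bernoulli_gf (t + 1) - bernoulli_gf t) * (fps_exp 1 - 1) = (fps_X * fps_exp t) * (fps_exp 1 - 1)" .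
  thus ?thesis using E1_ne0 by (simp add: mult_right_cancel)
qed

lemma bval_diff: "bernoulli_val (Suc n) ((t::'a::field_char_0) + 1) - bernoulli_val (Suc n) t = of_nat (Suc n) * t ^ n"
proof -
  have "bernoulli_val (Suc n) (t + 1) - bernoulli_val (Suc n) t
     = fact (Suc n) * ((bernoulli_gf (t + 1) - bernoulli_gf t) $ Suc n)"
    by (simp add: bernoulli_val_def algebra_simps)
  also have "\<dots> = fact (Suc n) * (t ^ n / fact n)" by (simp add: bgf_diff)
  also have "\<dots> = of_nat (Suc n) * t ^ n" by (simp add: fact_Suc field_simps)
  finally show ?thesis .
qed

lemma bval_poly: "\<exists>p. \<forall>t. poly p t = bernoulli_val n (t::'a::field_char_0)"
proof -
  let ?G = "bernoulli_gf (0::'a)"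
  have "bernoulli_val n t = poly (\<Sum>i=0..n. monom (fact n * ?G $ (n - i) / fact i) i) t" for t
  proof -
    have "bernoulli_gf t $ n = (\<Sum>i=0..n. t^i / fact i * ?G $ (n - i))"
      by (subst bgf_exp) (simp add: fps_mult_nth)
    thus ?thesis by (simp add: bernoulli_val_def poly_sum poly_monom sum_distrib_left mult_ac)
  qed
  thus ?thesis by metis
qed

lemma poly_bernpoly: "poly (bernpoly n) t = bernoulli_val n (t::'a::field_char_0)"
proof -
  obtain p where p: "\<forall>t. poly p t = bernoulli_val n (t::'a)" using bval_poly by blast
  have "\<forall>t. poly (bernpoly n) t = bernoulli_val n (t::'a)"
    unfolding bernpoly_def
  proof (rule theI[where a=p])
    show "\<forall>t. poly p t = bernoulli_val n t" by fact
    fix q :: "'a poly" assume "\<forall>t. poly q t = bernoulli_val n t"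
    hence "poly q = poly p" using p by auto
    thus "q = p" by (simp add: poly_eq_poly_eq_iff)
  qed
  thus ?thesis by blast
qed

lemma Dpoly_eq: "[:0, of_nat (Suc n):] * Dpoly n = bernpoly (Suc n) - [:bernoulli_num (Suc n)::'a::field_char_0:]"
proof -
  let ?q = "bernpoly (Suc n) - [:bernoulli_num (Suc n)::'a:]"
  have "poly ?q 0 = 0" by (simp add: poly_bernpoly bernoulli_num_def)
  hence "[:-0, 1:] dvd ?q" by (simp only: poly_eq_0_iff_dvd[symmetric])
  hence "[:0, 1:] dvd ?q" by simp
  moreover have "[:0, of_nat (Suc n)::'a:] = smult (of_nat (Suc n)) [:0,1:]" by simp
  ultimately have "[:0, of_nat (Suc n)::'a:] dvd ?q"
    by (metis dvd_smult_cancel of_nat_eq_0_iff nat.distinct(1) smult_dvd_iff)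
  thus ?thesis unfolding Dpoly_def by (rule dvd_mult_div_cancel)
qed

lemma Dpoly_diff: "(t + 1) * poly (Dpoly n) (t + 1) - t * poly (Dpoly n) t = (t::'a::field_char_0) ^ n"
proof -
  have e: "\<And>s. of_nat (Suc n) * (s * poly (Dpoly n) s) = bernoulli_val (Suc n) s - bernoulli_num (Suc n)"
    using Dpoly_eq[where n=n, THEN arg_cong[where f="\<lambda>p. poly p s" for s]]
    by (simp add: poly_bernpoly algebra_simps)
  have "of_nat (Suc n) * ((t + 1) * poly (Dpoly n) (t + 1) - t * poly (Dpoly n) t) = of_nat (Suc n) * t ^ n"
    by (simp only: right_diff_distrib e bval_diff[symmetric]) simp
  thus ?thesis by (metis of_nat_eq_0_iff nat.distinct(1) mult_left_cancel)
qed

lemma periodic_const: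
  fixes p :: "'a::field_char_0 poly" and c :: 'a
  assumes c: "c \<noteq> 0" and per: "\<And>x. poly p (x + c) = poly p x"
  shows "p = [:poly p 0:]"
proof (rule ccontr)
  let ?q = "p - [:poly p 0:]"
  assume "p \<noteq> [:poly p 0:]"
  hence q0: "?q \<noteq> 0" by simp
  have "poly p (of_nat n * c) = poly p 0" for n
    by (induction n) (auto simp: algebra_simps per[of "of_nat n * c" for n, simplified algebra_simps])
  hence "range (\<lambda>n::nat. of_nat n * c) \<subseteq> {x. poly ?q x = 0}" by auto
  moreover have "finite {x. poly ?q x = 0}" using q0 by (rule poly_roots_finite)
  moreover have "inj (\<lambda>n::nat. of_nat n * c)" using c by (auto intro!: injI)
  ultimately show False by (meson finite_subset range_inj_infinite)
qed

definition Lp :: "'a::field_char_0 \<Rightarrow> 'a poly \<Rightarrow> 'a poly" where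
  "Lp c f = (\<Sum>i\<le>degree f. smult (coeff f i * c^i) (pcompose (Dpoly i) [:0, inverse c:]))"

lemma poly_Lp: "poly (Lp c f) x = (\<Sum>i\<le>degree f. coeff f i * c^i * poly (Dpoly i) (x / c))"
  by (simp add: Lp_def poly_sum poly_pcompose divide_inverse mult_ac)

lemma Lp_step:
  fixes c :: "'a::field_char_0"
  assumes c: "c \<noteq> 0"
  shows "(x + c) / c * poly (Lp c f) (x + c) - x / c * poly (Lp c f) x = poly f x"
proof -
  have "(x + c) / c * poly (Lp c f) (x + c) - x / c * poly (Lp c f) x
     = (\<Sum>i\<le>degree f. coeff f i * c^i * ((x / c + 1) * poly (Dpoly i) (x / c + 1) - x / c * poly (Dpoly i) (x / c)))"
    using c by (simp add: poly_Lp sum_distrib_left sum_subtractf[symmetric] add_divide_distrib algebra_simps)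
  also have "\<dots> = (\<Sum>i\<le>degree f. coeff f i * x ^ i)"
    unfolding Dpoly_diff using c by (simp add: power_divide)
  also have "\<dots> = poly f x" by (simp add: poly_altdef)
  finally show ?thesis .
qed

theorem corollary4p6:
  fixes c a :: "'a::field_char_0" and f :: "'a poly"
  assumes "c \<noteq> 0"
  shows "f \<in> delta_op c ` {g * [:0, - a, 1:] | g. True} \<longleftrightarrow>
         (\<Sum>i\<le>degree f. coeff f i * poly (Dpoly i) (a / c) * c ^ i) = 0"
proof -
  note c = assms
  define P where "P = smult (inverse c) ([:0,1:] * Lp c f)"
  have polyP: "poly P x = x / c * poly (Lp c f) x" for x
    by (simp add: P_def divide_inverse mult_ac)
  have stepP: "poly P (x + c) - poly P x = poly f x" for x
    using Lp_step[OF c, of x f] by (simp add: polyP)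
  have target: "(\<Sum>i\<le>degree f. coeff f i * poly (Dpoly i) (a / c) * c ^ i) = poly (Lp c f) a"
    by (simp add: poly_Lp mult_ac)
  have X2: "[:0, - a, 1:] = [:0,1:] * [:-a, 1:]" by simp
  show ?thesis unfolding target
  proof
    assume "f \<in> delta_op c ` {g * [:0, - a, 1:] | g. True}"
    then obtain g where fg: "f = delta_op c (g * [:0, - a, 1:])" by auto
    define h where "h = g * [:0, - a, 1:]"
    have fh: "poly f x = poly h x - poly h (x + c)" for x
      unfolding fg h_def delta_op_def shift_phi_def by (simp only: poly_diff poly_pcompose) (simp add: add.commute)
    have "poly (P + h) (x + c) = poly (P + h) x" for x
    proof -
      have "poly P (x + c) - poly P x = poly h x - poly h (x + c)"
        using stepP[of x] fh[of x] by simp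
      thus ?thesis by (simp add: algebra_simps)
    qed
    hence "P + h = [:poly (P + h) 0:]" by (rule periodic_const[OF c])
    moreover have "poly (P + h) 0 = 0" by (simp add: polyP h_def)
    ultimately have "P = - h" by (simp add: eq_neg_iff_add_eq_0)
    hence "[:0,1:] * smult (inverse c) (Lp c f) = [:0,1:] * (- (g * [:-a,1:]))"
      unfolding P_def h_def X2 by (simp only: mult_smult_right mult_minus_right mult.left_commute[of g])
    hence "smult (inverse c) (Lp c f) = - (g * [:-a,1:])"
      by (subst (asm) mult_left_cancel) simp_all
    hence "poly (smult (inverse c) (Lp c f)) a = 0" by simp
    thus "poly (Lp c f) a = 0" using c by simp
  next
    assume "poly (Lp c f) a = 0"
    hence "[:-a,1:] dvd Lp c f" by (simp add: poly_eq_0_iff_dvd)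
    then obtain q where q: "Lp c f = [:-a,1:] * q" by (auto elim: dvdE)
    define g where "g = - smult (inverse c) q"
    have gP: "g * [:0, - a, 1:] = - P"
      unfolding g_def P_def q X2 by (simp only: mult_smult_right mult_smult_left mult_minus_right mult_minus_left mult_ac)
    have "delta_op c (g * [:0, - a, 1:]) = f"
    proof (rule poly_eq_poly_eq_iff[THEN iffD1], rule ext)
      fix x
      show "poly (delta_op c (g * [:0, - a, 1:])) x = poly f x"
        unfolding gP using stepP[of x] by (simp add: delta_op_def shift_phi_def poly_pcompose add.commute)
    qed
    thus "f \<in> delta_op c ` {g * [:0, - a, 1:] | g. True}" by blast
  qed
qed

end
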